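(* Let $m$ be an odd positive integer and let $D_{2m}=\langle a,b\mid a^m=b^2=1,\ b^{-1}ab=a^{-1}\rangle$ be the dihedral group of order $2m$. For every prime $p$ dividing $m$ write $m=p^{k_p}m_p$ with $p\nmid m_p$, and let "$u\in_p\langle v\rangle$" abbreviate $\bigvee_{j=0}^{p^{k_p}-1}(u=v^j)$. Then the following d-identities form a basis of d-identities of $D_{2m}$ (i.e. they all hold in $D_{2m}$, and every group satisfying all of them is isomorphic to a section of $D_{2m}$): (1) $\omega_{2m}=\bigvee_{0\le i<j\le 2m}(x_i=x_j)$; (2) $(x^2=1)\vee(y^2=1)\vee(xy=yx)$; (3) $(x^2=1)\vee(x^m=1)$; (4) for every prime $p$ dividing $m$: $(x_1^2=1)\vee(x_2^2=1)\vee(x_1^{m_p}\in_p\langle x_2^{m_p}\rangle)\vee(x_2^{m_p}\in_p\langle x_1^{m_p}\rangle)$; (5) $(x_1^m=1)\vee(x_2^m=1)\vee((x_1x_2)^m=1)$.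
   Context: A d-identity (disjunctive identity) is a universally quantified formula $\forall x_1\dots x_k\,[(f_1=1)\vee\dots\vee(f_n=1)]$ with the $f_i$ words in the free group on the variables; $u=v$ abbreviates $uv^{-1}=1$. A group satisfies it if it is true for all assignments of group elements. For a group $G$, $\mathrm{dvar}(G)$ is the class of groups satisfying every d-identity satisfied by $G$; for finite $G$ it is exactly the class of groups isomorphic to sections (quotients of subgroups) of $G$. A set of d-identities is a basis of d-identities of $G$ if all its members hold in $G$ and every group satisfying them lies in $\mathrm{dvar}(G)$. *)

theory Defs
  imports "HOL-Algebra.Algebra" "HOL-Computational_Algebra.Primes"
begin

text \<open>Concrete model of the dihedral group D_{2m} of order 2m: the element (i, s)
  stands for a^i b^(if s then 1 else 0), with 0 <= i < m. Using b a^j = a^(-j) b,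
  (a^i b^s)(a^j b^t) = a^(i +- j) b^(s+t).\<close>
definition dihedral :: "nat \<Rightarrow> (nat \<times> bool) monoid" where
  "dihedral m = \<lparr> carrier = {0..<m} \<times> UNIV,
     monoid.mult = (\<lambda>(i, s) (j, t). ((if s then i + (m - j) else i + j) mod m, s \<noteq> t)),
     one = (0, False) \<rparr>"

definition is_section_of :: "('b, 'c) monoid_scheme \<Rightarrow> ('a, 'd) monoid_scheme \<Rightarrow> bool" where
  "is_section_of H G \<longleftrightarrow> (\<exists>K N. subgroup K G \<and> normal N (G\<lparr>carrier := K\<rparr>)
      \<and> H \<cong> (G\<lparr>carrier := K\<rparr>) Mod N)"

definition did1 :: "nat \<Rightarrow> ('a, 'b) monoid_scheme \<Rightarrow> bool" where
  "did1 m G \<longleftrightarrow> (\<forall>x :: nat \<Rightarrow> 'a. (\<forall>i\<le>2*m. x i \<in> carrier G) \<longrightarrow>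
      (\<exists>i j. i < j \<and> j \<le> 2*m \<and> x i = x j))"

definition did2 :: "('a, 'b) monoid_scheme \<Rightarrow> bool" where
  "did2 G \<longleftrightarrow> (\<forall>x\<in>carrier G. \<forall>y\<in>carrier G.
      x [^]\<^bsub>G\<^esub> (2::nat) = \<one>\<^bsub>G\<^esub> \<or> y [^]\<^bsub>G\<^esub> (2::nat) = \<one>\<^bsub>G\<^esub> \<or> x \<otimes>\<^bsub>G\<^esub> y = y \<otimes>\<^bsub>G\<^esub> x)"

definition did3 :: "nat \<Rightarrow> ('a, 'b) monoid_scheme \<Rightarrow> bool" where
  "did3 m G \<longleftrightarrow> (\<forall>x\<in>carrier G.
      x [^]\<^bsub>G\<^esub> (2::nat) = \<one>\<^bsub>G\<^esub> \<or> x [^]\<^bsub>G\<^esub> m = \<one>\<^bsub>G\<^esub>)"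

definition in_p :: "nat \<Rightarrow> nat \<Rightarrow> ('a, 'b) monoid_scheme \<Rightarrow> 'a \<Rightarrow> 'a \<Rightarrow> bool" where
  "in_p m p G u v \<longleftrightarrow> (\<exists>j < p ^ multiplicity p m. u = v [^]\<^bsub>G\<^esub> j)"

definition did4 :: "nat \<Rightarrow> nat \<Rightarrow> ('a, 'b) monoid_scheme \<Rightarrow> bool" where
  "did4 m p G \<longleftrightarrow> (let mp = m div p ^ multiplicity p m in
     \<forall>x1\<in>carrier G. \<forall>x2\<in>carrier G.
      x1 [^]\<^bsub>G\<^esub> (2::nat) = \<one>\<^bsub>G\<^esub> \<or> x2 [^]\<^bsub>G\<^esub> (2::nat) = \<one>\<^bsub>G\<^esub>
      \<or> in_p m p G (x1 [^]\<^bsub>G\<^esub> mp) (x2 [^]\<^bsub>G\<^esub> mp)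
      \<or> in_p m p G (x2 [^]\<^bsub>G\<^esub> mp) (x1 [^]\<^bsub>G\<^esub> mp))"

definition did5 :: "nat \<Rightarrow> ('a, 'b) monoid_scheme \<Rightarrow> bool" where
  "did5 m G \<longleftrightarrow> (\<forall>x1\<in>carrier G. \<forall>x2\<in>carrier G.
      x1 [^]\<^bsub>G\<^esub> m = \<one>\<^bsub>G\<^esub> \<or> x2 [^]\<^bsub>G\<^esub> m = \<one>\<^bsub>G\<^esub>
      \<or> (x1 \<otimes>\<^bsub>G\<^esub> x2) [^]\<^bsub>G\<^esub> m = \<one>\<^bsub>G\<^esub>)"

definition satisfies_all :: "nat \<Rightarrow> ('a, 'b) monoid_scheme \<Rightarrow> bool" where
  "satisfies_all m G \<longleftrightarrow> did1 m G \<and> did2 G \<and> did3 m G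
     \<and> (\<forall>p::nat. Factorial_Ring.prime p \<and> p dvd m \<longrightarrow> did4 m p G) \<and> did5 m G"

end

theory Submission
  imports Defs
begin


lemma dcarrier: "carrier (dihedral m) = {0..<m} \<times> UNIV" by (simp add: dihedral_def)
lemma dunit: "\<one>\<^bsub>dihedral m\<^esub> = (0, False)" by (simp add: dihedral_def)
lemma dmult: "(i, s) \<otimes>\<^bsub>dihedral m\<^esub> (j, t) = ((if s then i + (m - j) else i + j) mod m, s \<noteq> t)"
  by (simp add: dihedral_def)

lemma dmult_int: "j < m \<Longrightarrow> (if s then i + (m - j) else i + j) mod m
   = nat ((int i + (if s then - int j else int j)) mod int m)"
proof -
  assume j: "j < m"
  show ?thesis
  proof (cases s)
    case True
    have "int (i + (m - j)) = (int i - int j) + int m" using j by simp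
    then have "int ((i + (m - j)) mod m) = ((int i - int j) + int m) mod int m"
      by (metis of_nat_mod)
    also have "\<dots> = (int i - int j) mod int m" by simp
    finally show ?thesis using True by simp
  next
    case False
    have "(int i + int j) mod int m = int ((i+j) mod m)" by (simp add: of_nat_mod)
    then show ?thesis using False by simp
  qed
qed

lemma natmod_less: "0 < m \<Longrightarrow> nat (x mod int m) < m"
  by (simp add: nat_less_iff)

lemma intnatmod: "0 < m \<Longrightarrow> int (nat (x mod int m)) = x mod int m"
  by simp

lemma dmult': "i < m \<Longrightarrow> j < m \<Longrightarrow> (i, s) \<otimes>\<^bsub>dihedral m\<^esub> (j, t)
   = (nat ((int i + (if s then - int j else int j)) mod int m), s \<noteq> t)"
  using dmult_int dmult by metis

lemma dihedral_group: assumes "m > 0" shows "group (dihedral m)"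
proof (rule groupI)
  fix x y assume "x \<in> carrier (dihedral m)" "y \<in> carrier (dihedral m)"
  then show "x \<otimes>\<^bsub>dihedral m\<^esub> y \<in> carrier (dihedral m)"
    using assms by (cases x; cases y) (simp add: dcarrier dmult)
next
  show "\<one>\<^bsub>dihedral m\<^esub> \<in> carrier (dihedral m)" using assms by (simp add: dcarrier dunit)
next
  fix x assume "x \<in> carrier (dihedral m)"
  then show "\<one>\<^bsub>dihedral m\<^esub> \<otimes>\<^bsub>dihedral m\<^esub> x = x"
    by (cases x) (simp add: dcarrier dunit dmult)
next
  fix x assume x: "x \<in> carrier (dihedral m)"
  obtain i s where xi: "x = (i, s)" by (cases x)
  have i: "i < m" using x xi by (simp add: dcarrier)
  show "\<exists>y\<in>carrier (dihedral m). y \<otimes>\<^bsub>dihedral m\<^esub> x = \<one>\<^bsub>dihedral m\<^esub>"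
  proof (cases s)
    case True
    then show ?thesis using i xi
      by (intro bexI[of _ "(i, True)"]) (simp_all add: dcarrier dmult dunit)
  next
    case False
    then show ?thesis using i xi assms
      by (intro bexI[of _ "((m - i) mod m, False)"]) (simp_all add: dcarrier dmult dunit mod_add_left_eq)
  qed
next
  fix x y z assume x: "x \<in> carrier (dihedral m)" and y: "y \<in> carrier (dihedral m)"
    and z: "z \<in> carrier (dihedral m)"
  obtain i s where xi: "x = (i, s)" by (cases x)
  obtain j t where yj: "y = (j, t)" by (cases y)
  obtain k u where zk: "z = (k, u)" by (cases z)
  have i: "i < m" and j: "j < m" and k: "k < m" using x y z xi yj zk by (auto simp: dcarrier)
  have jk: "(if t then j + (m - k) else j + k) mod m < m" using assms by simp
  show "x \<otimes>\<^bsub>dihedral m\<^esub> y \<otimes>\<^bsub>dihedral m\<^esub> z = x \<otimes>\<^bsub>dihedral m\<^esub> (y \<otimes>\<^bsub>dihedral m\<^esub> z)"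
    unfolding xi yj zk
    using assms i j k
    by (simp only: dmult' natmod_less) (cases s; cases t; cases u; simp add: intnatmod mod_simps algebra_simps)
qed


lemma rpow: "i < m \<Longrightarrow> (i, False) [^]\<^bsub>dihedral m\<^esub> (k::nat) = (i * k mod m, False)"
proof (induction k)
  case 0 then show ?case by (simp add: dunit)
next
  case (Suc k) then show ?case by (simp add: dmult mod_add_right_eq algebra_simps)
qed

lemma fpow: "i < m \<Longrightarrow> (i, True) [^]\<^bsub>dihedral m\<^esub> (k::nat) = (if even k then (0, False) else (i, True))"
proof (induction k)
  case 0 then show ?case by (simp add: dunit)
next
  case (Suc k) then show ?case by (simp add: dmult)
qed

lemma solve_cong:
  fixes i j q :: nat
  assumes "q > 0" "gcd j q dvd i"
  shows "\<exists>e<q. i mod q = (j * e) mod q"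
proof (cases "j = 0")
  case True
  then have "q dvd i" using assms by simp
  then show ?thesis using assms True by (intro exI[of _ 0]) auto
next
  case False
  obtain x y where xy: "j * x = q * y + gcd j q" using bezout_nat[OF False] by blast
  obtain c where c: "i = gcd j q * c" using assms by (auto elim: dvdE)
  have "j * (x * c) = q * (y * c) + i" using xy c by (simp add: algebra_simps)
  then have "(j * (x * c)) mod q = i mod q" by simp
  then have "(j * ((x * c) mod q)) mod q = i mod q" by (simp add: mod_mult_right_eq)
  then show ?thesis using assms by (intro exI[of _ "(x * c) mod q"]) auto
qed

lemma primepow_compare:
  fixes p :: nat
  assumes p: "Factorial_Ring.prime p"
  shows "\<forall>i j. (\<exists>e < p ^ k. i mod p ^ k = (j * e) mod p ^ k) \<or> (\<exists>e < p ^ k. j mod p ^ k = (i * e) mod p ^ k)"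
proof (intro allI)
  fix i j :: nat
  have q: "p ^ k > 0" using p by (simp add: prime_gt_0_nat)
  obtain a where a: "gcd i (p^k) = p ^ a" using divides_primepow_nat[OF p] by (meson gcd_dvd2)
  obtain b where b: "gcd j (p^k) = p ^ b" using divides_primepow_nat[OF p] by (meson gcd_dvd2)
  show "(\<exists>e < p ^ k. i mod p ^ k = (j * e) mod p ^ k) \<or> (\<exists>e < p ^ k. j mod p ^ k = (i * e) mod p ^ k)"
  proof (cases "b \<le> a")
    case True
    then have "gcd j (p^k) dvd gcd i (p^k)" using a b by (simp add: le_imp_power_dvd)
    then have "gcd j (p^k) dvd i" using dvd_trans gcd_dvd1 by blast
    then show ?thesis using solve_cong[OF q] by blast
  next
    case False
    then have "gcd i (p^k) dvd gcd j (p^k)" using a b by (simp add: le_imp_power_dvd)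
    then have "gcd i (p^k) dvd j" using dvd_trans gcd_dvd1 by blast
    then show ?thesis using solve_cong[OF q] by blast
  qed
qed

lemma dcard: "card (carrier (dihedral m)) = 2 * m"
  by (simp add: dcarrier card_cartesian_product)

lemma dfinite: "finite (carrier (dihedral m))"
  by (simp add: dcarrier)

lemma D_did1: "did1 m (dihedral m)"
  unfolding did1_def
proof (intro allI impI)
  fix x :: "nat \<Rightarrow> nat \<times> bool"
  assume x: "\<forall>i\<le>2*m. x i \<in> carrier (dihedral m)"
  show "\<exists>i j. i < j \<and> j \<le> 2*m \<and> x i = x j"
  proof (rule ccontr)
    assume "\<not> ?thesis"
    then have "inj_on x {..2*m}" unfolding inj_on_def
      by (metis atMost_iff linorder_neqE_nat)
    then have "card (x ` {..2*m}) = 2*m + 1" by (simp add: card_image)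
    moreover have "x ` {..2*m} \<subseteq> carrier (dihedral m)" using x by auto
    ultimately have "2*m+1 \<le> 2*m" using card_mono[OF dfinite] dcard by metis
    then show False by simp
  qed
qed

lemma D_did2: "did2 (dihedral m)"
  unfolding did2_def
proof (intro ballI)
  fix x y assume x: "x \<in> carrier (dihedral m)" and y: "y \<in> carrier (dihedral m)"
  obtain i s where xi: "x = (i, s)" by (cases x)
  obtain j t where yj: "y = (j, t)" by (cases y)
  have i: "i < m" and j: "j < m" using x y xi yj by (auto simp: dcarrier)
  show "x [^]\<^bsub>dihedral m\<^esub> (2::nat) = \<one>\<^bsub>dihedral m\<^esub> \<or> y [^]\<^bsub>dihedral m\<^esub> (2::nat) = \<one>\<^bsub>dihedral m\<^esub> \<or>
        x \<otimes>\<^bsub>dihedral m\<^esub> y = y \<otimes>\<^bsub>dihedral m\<^esub> x"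
    using i j xi yj by (cases s; cases t) (simp_all add: fpow dunit dmult add.commute)
qed

lemma D_did3: "did3 m (dihedral m)"
  unfolding did3_def
proof (intro ballI)
  fix x assume x: "x \<in> carrier (dihedral m)"
  obtain i s where xi: "x = (i, s)" by (cases x)
  have i: "i < m" using x xi by (auto simp: dcarrier)
  show "x [^]\<^bsub>dihedral m\<^esub> (2::nat) = \<one>\<^bsub>dihedral m\<^esub> \<or> x [^]\<^bsub>dihedral m\<^esub> m = \<one>\<^bsub>dihedral m\<^esub>"
    using i xi by (cases s) (simp_all add: fpow rpow dunit)
qed

lemma D_did5: "m > 0 \<Longrightarrow> did5 m (dihedral m)"
  unfolding did5_def
proof (intro ballI)
  assume m: "m > 0"
  fix x y assume x: "x \<in> carrier (dihedral m)" and y: "y \<in> carrier (dihedral m)"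
  obtain i s where xi: "x = (i, s)" by (cases x)
  obtain j t where yj: "y = (j, t)" by (cases y)
  have i: "i < m" and j: "j < m" using x y xi yj by (auto simp: dcarrier)
  show "x [^]\<^bsub>dihedral m\<^esub> m = \<one>\<^bsub>dihedral m\<^esub> \<or> y [^]\<^bsub>dihedral m\<^esub> m = \<one>\<^bsub>dihedral m\<^esub> \<or>
        (x \<otimes>\<^bsub>dihedral m\<^esub> y) [^]\<^bsub>dihedral m\<^esub> m = \<one>\<^bsub>dihedral m\<^esub>"
    using i j xi yj m by (cases s; cases t) (simp_all add: rpow dunit dmult)
qed

lemma D_did4:
  fixes p :: nat
  assumes m: "m > 0" and p: "Factorial_Ring.prime p"
  shows "did4 m p (dihedral m)"
  unfolding did4_def Let_def
proof (intro ballI)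
  define q where "q = p ^ multiplicity p m"
  define r where "r = m div q"
  have mqr: "m = q * r" unfolding r_def q_def by (simp add: multiplicity_dvd)
  have q0: "q > 0" using p unfolding q_def by (simp add: prime_gt_0_nat)
  fix x y assume x: "x \<in> carrier (dihedral m)" and y: "y \<in> carrier (dihedral m)"
  obtain i s where xi: "x = (i, s)" by (cases x)
  obtain j t where yj: "y = (j, t)" by (cases y)
  have i: "i < m" and j: "j < m" using x y xi yj by (auto simp: dcarrier)
  have key: "(i * r mod m, False) = (j * r mod m, False) [^]\<^bsub>dihedral m\<^esub> e"
    if "e < q" "i mod q = (j * e) mod q" for i j e
  proof -
    have jr: "j * r mod m < m" using m by simp
    have "i * r mod m = (i mod q) * r" unfolding mqr by (simp add: mod_mult_mult2)
    also have "\<dots> = ((j * e) mod q) * r" using that by simp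
    also have "\<dots> = (j * e * r) mod m" unfolding mqr by (simp add: mod_mult_mult2)
    also have "\<dots> = (j * r mod m) * e mod m" by (simp add: mod_mult_right_eq algebra_simps)
    finally show ?thesis by (simp add: rpow[OF jr])
  qed
  show "x [^]\<^bsub>dihedral m\<^esub> (2::nat) = \<one>\<^bsub>dihedral m\<^esub> \<or> y [^]\<^bsub>dihedral m\<^esub> (2::nat) = \<one>\<^bsub>dihedral m\<^esub> \<or>
        in_p m p (dihedral m) (x [^]\<^bsub>dihedral m\<^esub> (m div p ^ multiplicity p m)) (y [^]\<^bsub>dihedral m\<^esub> (m div p ^ multiplicity p m)) \<or>
        in_p m p (dihedral m) (y [^]\<^bsub>dihedral m\<^esub> (m div p ^ multiplicity p m)) (x [^]\<^bsub>dihedral m\<^esub> (m div p ^ multiplicity p m))"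
  proof (cases "s \<or> t")
    case True
    then show ?thesis using i j xi yj by (auto simp: fpow dunit)
  next
    case False
    then have "x [^]\<^bsub>dihedral m\<^esub> r = (i * r mod m, False)" "y [^]\<^bsub>dihedral m\<^esub> r = (j * r mod m, False)"
      using xi yj i j by (simp_all add: rpow)
    moreover have "(\<exists>e < q. i mod q = (j * e) mod q) \<or> (\<exists>e < q. j mod q = (i * e) mod q)"
      using primepow_compare[OF p] unfolding q_def by blast
    ultimately show ?thesis unfolding in_p_def using key
      by (metis q_def r_def)
  qed
qed

lemma D_sat: "m > 0 \<Longrightarrow> satisfies_all m (dihedral m)"
  unfolding satisfies_all_def using D_did1 D_did2 D_did3 D_did4 D_did5 by blast



definition cyc :: "('a, 'b) monoid_scheme \<Rightarrow> 'a \<Rightarrow> 'a set" where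
  "cyc G g = range (\<lambda>i::nat. g [^]\<^bsub>G\<^esub> i)"

context group begin

lemma cyc_sub: "g \<in> carrier G \<Longrightarrow> cyc G g \<subseteq> carrier G"
  unfolding cyc_def by auto

lemma cyc_self: "g \<in> carrier G \<Longrightarrow> g \<in> cyc G g"
  unfolding cyc_def by (metis nat_pow_eone rangeI)

lemma cyc_powI: "g [^] (i::nat) \<in> cyc G g"
  unfolding cyc_def by auto

lemma cyc_pow: "g \<in> carrier G \<Longrightarrow> a \<in> cyc G g \<Longrightarrow> a [^] (k::nat) \<in> cyc G g"
  unfolding cyc_def by (auto simp: nat_pow_pow)

lemma cyc_mult: "g \<in> carrier G \<Longrightarrow> a \<in> cyc G g \<Longrightarrow> b \<in> cyc G g \<Longrightarrow> a \<otimes> b \<in> cyc G g"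
  unfolding cyc_def by (auto simp: nat_pow_mult)

lemma cyc_trans: "g \<in> carrier G \<Longrightarrow> h \<in> cyc G g \<Longrightarrow> cyc G h \<subseteq> cyc G g"
  unfolding cyc_def by (auto simp: nat_pow_pow)

lemma cyc_max:
  assumes fin: "finite (carrier G)" and A: "A \<subseteq> carrier G" "A \<noteq> {}"
    and cmp: "\<forall>x\<in>A. \<forall>y\<in>A. x \<in> cyc G y \<or> y \<in> cyc G x"
  shows "\<exists>g\<in>A. A \<subseteq> cyc G g"
proof -
  have finA: "finite A" using fin A finite_subset by blast
  define M where "M = Max ((\<lambda>x. card (cyc G x)) ` A)"
  have "M \<in> (\<lambda>x. card (cyc G x)) ` A" unfolding M_def using finA A by auto
  then obtain g where g: "g \<in> A" "card (cyc G g) = M" by auto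
  have le: "card (cyc G x) \<le> card (cyc G g)" if "x \<in> A" for x
    unfolding g(2) M_def using finA that by auto
  have "x \<in> cyc G g" if x: "x \<in> A" for x
  proof -
    from cmp x g(1) have "x \<in> cyc G g \<or> g \<in> cyc G x" by blast
    then show ?thesis
    proof
      assume "g \<in> cyc G x"
      then have sub: "cyc G g \<subseteq> cyc G x" using cyc_trans A x by blast
      have "finite (cyc G x)" using cyc_sub A x fin finite_subset by blast
      then have "cyc G g = cyc G x" using card_subset_eq[OF _ sub] le[OF x]
        by (metis card_mono dual_order.antisym sub)
      then show ?thesis using cyc_self A x by blast
    qed
  qed
  then show ?thesis using g by blast
qed

lemma pow_closed_set:
  assumes "\<one> \<in> N" "\<forall>x\<in>N. \<forall>y\<in>N. x \<otimes> y \<in> N" "x \<in> N"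
  shows "x [^] (k::nat) \<in> N"
  using assms by (induction k) auto

lemma cyc_gen:
  fixes n :: nat
  assumes fin: "finite (carrier G)"
  shows "0 < n \<Longrightarrow> N \<subseteq> carrier G \<Longrightarrow> \<one> \<in> N \<Longrightarrow> (\<forall>x\<in>N. \<forall>y\<in>N. x \<otimes> y \<in> N)
    \<Longrightarrow> (\<forall>x\<in>N. \<forall>y\<in>N. x \<otimes> y = y \<otimes> x) \<Longrightarrow> (\<forall>x\<in>N. x [^] n = \<one>)
    \<Longrightarrow> (\<forall>p. Factorial_Ring.prime p \<and> p dvd n \<longrightarrow> (\<forall>x\<in>N. \<forall>y\<in>N.
           x [^] (n div p ^ multiplicity p n) \<in> cyc G (y [^] (n div p ^ multiplicity p n))
         \<or> y [^] (n div p ^ multiplicity p n) \<in> cyc G (x [^] (n div p ^ multiplicity p n))))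
    \<Longrightarrow> \<exists>g\<in>N. N \<subseteq> cyc G g"
proof (induction n arbitrary: N rule: less_induct)
  case (less n)
  note n0 = less.prems(1) and Nsub = less.prems(2) and N1 = less.prems(3)
    and Nmult = less.prems(4) and Ncomm = less.prems(5) and Npow = less.prems(6)
    and Ncmp = less.prems(7)
  show ?case
  proof (cases "n = 1")
    case True
    have "N \<subseteq> cyc G \<one>"
    proof
      fix x assume "x \<in> N"
      then have "x = \<one>" using Npow Nsub True by (metis nat_pow_eone subsetD)
      then show "x \<in> cyc G \<one>" using cyc_self by simp
    qed
    then show ?thesis using N1 by blast
  next
    case False
    then obtain p :: nat where p: "Factorial_Ring.prime p" "p dvd n" using prime_factor_nat by blast
    define q where "q = p ^ multiplicity p n"
    define r where "r = n div q"
    have nqr: "n = q * r" unfolding r_def q_def by (simp add: multiplicity_dvd)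
    have mp: "multiplicity p n > 0" using p n0 by (simp add: prime_multiplicity_gt_zero_iff)
    have q1: "q > 1" unfolding q_def using mp prime_gt_1_nat[OF p(1)] by (metis One_nat_def neq0_conv one_less_power)
    have r0: "r > 0" using nqr n0 by (simp add: nat_0_less_mult_iff)
    have rn: "r < n" using nqr q1 r0 by simp
    have pr: "\<not> p dvd r" unfolding r_def q_def by (rule multiplicity_decompose) (use n0 p(1) not_prime_unit in auto)
    have cop: "coprime q r" unfolding q_def using p pr
      by (simp add: prime_imp_coprime coprime_power_left_iff)
    have inN: "x [^] (k::nat) \<in> N" if "x \<in> N" for x k using pow_closed_set N1 Nmult that by blast
    have Ncar: "x \<in> carrier G" if "x \<in> N" for x using Nsub that by blast
    define N' where "N' = (\<lambda>x. x [^] q) ` N"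
    have IH: "\<exists>g\<in>N'. N' \<subseteq> cyc G g"
    proof (rule less.IH[OF rn r0])
      show "N' \<subseteq> carrier G" unfolding N'_def using Ncar by auto
      show "\<one> \<in> N'" unfolding N'_def using N1 by (metis image_eqI nat_pow_one)
      show "\<forall>x\<in>N'. \<forall>y\<in>N'. x \<otimes> y \<in> N'" unfolding N'_def
        using Nmult Ncomm Ncar by (auto simp flip: pow_mult_distrib)
      show "\<forall>x\<in>N'. \<forall>y\<in>N'. x \<otimes> y = y \<otimes> x" unfolding N'_def
        using Ncomm inN by auto
      show "\<forall>x\<in>N'. x [^] r = \<one>" unfolding N'_def
        using Npow Ncar nqr by (auto simp: nat_pow_pow)
      show "\<forall>p'. Factorial_Ring.prime p' \<and> p' dvd r \<longrightarrow> (\<forall>x\<in>N'. \<forall>y\<in>N'.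
           x [^] (r div p' ^ multiplicity p' r) \<in> cyc G (y [^] (r div p' ^ multiplicity p' r))
         \<or> y [^] (r div p' ^ multiplicity p' r) \<in> cyc G (x [^] (r div p' ^ multiplicity p' r)))"
      proof (intro allI impI ballI)
        fix p' x' y' assume p': "Factorial_Ring.prime p' \<and> p' dvd r" and x': "x' \<in> N'" and y': "y' \<in> N'"
        obtain x y where x: "x \<in> N" "x' = x [^] q" and y: "y \<in> N" "y' = y [^] q"
          using x' y' unfolding N'_def by auto
        have pp': "p' \<noteq> p" using p' pr by blast
        have "multiplicity p' n = multiplicity p' q + multiplicity p' r"
          unfolding nqr using q1 r0 p' by (simp add: prime_elem_multiplicity_mult_distrib)
        moreover have "multiplicity p' q = 0" unfolding q_def
          using p p' pp' by (simp add: multiplicity_distinct_prime_power)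
        ultimately have mul: "multiplicity p' n = multiplicity p' r" by simp
        have dv: "p' ^ multiplicity p' r dvd r" by (rule multiplicity_dvd)
        have e: "q * (r div p' ^ multiplicity p' r) = n div p' ^ multiplicity p' n"
          by (metis mul nqr div_mult_swap[OF dv])
        have "p' dvd n" using p' nqr by simp
        then have "x [^] (n div p' ^ multiplicity p' n) \<in> cyc G (y [^] (n div p' ^ multiplicity p' n))
         \<or> y [^] (n div p' ^ multiplicity p' n) \<in> cyc G (x [^] (n div p' ^ multiplicity p' n))"
          using Ncmp p' x y by blast
        then show "x' [^] (r div p' ^ multiplicity p' r) \<in> cyc G (y' [^] (r div p' ^ multiplicity p' r))
         \<or> y' [^] (r div p' ^ multiplicity p' r) \<in> cyc G (x' [^] (r div p' ^ multiplicity p' r))"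
          using x y Ncar by (simp add: nat_pow_pow e)
      qed
    qed
    then obtain z where z: "z \<in> N'" "N' \<subseteq> cyc G z" by blast
    obtain z0 where z0: "z0 \<in> N" "z = z0 [^] q" using z unfolding N'_def by auto
    have zN: "z \<in> N" using z0 inN by simp
    have zr: "z [^] r = \<one>" using z0 Npow Ncar nqr by (simp add: nat_pow_pow)
    define A where "A = (\<lambda>x. x [^] r) ` N"
    have "\<exists>w\<in>A. A \<subseteq> cyc G w"
    proof (rule cyc_max[OF fin])
      show "A \<subseteq> carrier G" unfolding A_def using Ncar by auto
      show "A \<noteq> {}" unfolding A_def using N1 by auto
      show "\<forall>x\<in>A. \<forall>y\<in>A. x \<in> cyc G y \<or> y \<in> cyc G x"
        unfolding A_def using Ncmp p unfolding r_def q_def by blast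
    qed
    then obtain w where w: "w \<in> A" "A \<subseteq> cyc G w" by blast
    obtain w0 where w0: "w0 \<in> N" "w = w0 [^] r" using w unfolding A_def by auto
    have wN: "w \<in> N" using w0 inN by simp
    have wq: "w [^] q = \<one>" using w0 Npow Ncar nqr by (simp add: nat_pow_pow mult.commute)
    define g where "g = z \<otimes> w"
    have gN: "g \<in> N" unfolding g_def using zN wN Nmult by blast
    have gpow: "g [^] k = z [^] k \<otimes> w [^] k" for k :: nat
    proof -
      have zw: "z \<otimes> w = w \<otimes> z" using zN wN Ncomm by blast
      show ?thesis unfolding g_def using pow_mult_distrib[OF zw] Ncar zN wN by blast
    qed
    have gcar: "g \<in> carrier G" using gN Ncar by blast
    have zc: "z \<in> cyc G g"
    proof -
      obtain a b where ab: "q * a = r * b + 1" using bezout_nat[of q r] q1 cop by auto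
      have "g [^] (q * a) = z [^] (q * a) \<otimes> w [^] (q * a)" by (rule gpow)
      also have "w [^] (q * a) = \<one>" using wq wN Ncar by (simp add: nat_pow_pow[symmetric])
      also have "z [^] (q * a) = z" using ab zr zN Ncar
        by (simp add: nat_pow_mult[symmetric] nat_pow_pow[symmetric])
      finally have "g [^] (q * a) = z" using zN Ncar by simp
      then show ?thesis using cyc_powI by metis
    qed
    have wc: "w \<in> cyc G g"
    proof -
      obtain a b where ab: "r * a = q * b + 1" using bezout_nat[of r q] r0 cop
        by (auto simp: coprime_commute)
      have "g [^] (r * a) = z [^] (r * a) \<otimes> w [^] (r * a)" by (rule gpow)
      also have "z [^] (r * a) = \<one>" using zr zN Ncar by (simp add: nat_pow_pow[symmetric])
      also have "w [^] (r * a) = w" using ab wq wN Ncar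
        by (simp add: nat_pow_mult[symmetric] nat_pow_pow[symmetric])
      finally have "g [^] (r * a) = w" using wN Ncar by simp
      then show ?thesis using cyc_powI by metis
    qed
    have "N \<subseteq> cyc G g"
    proof
      fix x assume x: "x \<in> N"
      have xq: "x [^] q \<in> cyc G g" using x z(2) cyc_trans[OF gcar zc] unfolding N'_def by blast
      have xr: "x [^] r \<in> cyc G g" using x w(2) cyc_trans[OF gcar wc] unfolding A_def by blast
      obtain a b where ab: "q * a = r * b + 1" using bezout_nat[of q r] q1 cop by auto
      have "(x [^] q) [^] a \<otimes> (x [^] r) [^] (b * (n - 1)) = x [^] (q * a + r * (b * (n - 1)))"
        using x Ncar by (simp add: nat_pow_pow nat_pow_mult)
      also have "q * a + r * (b * (n - 1)) = 1 + n * (r * b)"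
        using ab n0 by (simp add: algebra_simps diff_mult_distrib2 diff_mult_distrib)
      also have "x [^] (1 + n * (r * b)) = x"
        using x Ncar Npow by (simp add: nat_pow_mult[symmetric] nat_pow_pow[symmetric])
      finally have "x = (x [^] q) [^] a \<otimes> (x [^] r) [^] (b * (n - 1))" by simp
      then show "x \<in> cyc G g" using cyc_mult[OF gcar] cyc_pow[OF gcar] xq xr by metis
    qed
    then show ?thesis using gN by blast
  qed
qed

end


lemma Kmult:
  assumes mdn: "m = d * n" and n0: "n > 0" and i1: "i1 < n" and i2: "i2 < n"
  shows "(d * i1, s1) \<otimes>\<^bsub>dihedral m\<^esub> (d * i2, s2)
     = (d * (if s1 then (i1 + (n - i2)) mod n else (i1 + i2) mod n), s1 \<noteq> s2)"
proof (cases s1)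
  case True
  have "d * i1 + (m - d * i2) = d * (i1 + (n - i2))"
    using mdn i2 by (simp add: diff_mult_distrib2 algebra_simps)
  then show ?thesis using True by (simp add: dmult mdn mod_mult_mult1 mult.commute[of d n])
next
  case False
  have "d * i1 + d * i2 = d * (i1 + i2)" by (simp add: algebra_simps)
  then show ?thesis using False by (simp add: dmult mdn mod_mult_mult1 mult.commute[of d n])
qed

context group begin

lemma finite_from_did1:
  assumes "did1 m G" shows "finite (carrier G)"
proof (rule ccontr)
  assume inf: "infinite (carrier G)"
  obtain S where S: "finite S" "card S = 2*m+1" "S \<subseteq> carrier G"
    using infinite_arbitrarily_large[OF inf] by blast
  obtain h where h: "bij_betw h {0..<2*m+1} S" using ex_bij_betw_nat_finite[OF S(1)] S(2) by metis
  have "\<forall>i\<le>2*m. h i \<in> carrier G" using h S(3) bij_betwE by fastforce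
  then obtain i j where ij: "i < j" "j \<le> 2*m" "h i = h j" using assms unfolding did1_def by blast
  have "inj_on h {0..<2*m+1}" using h bij_betw_def by blast
  moreover have "i \<in> {0..<2*m+1}" "j \<in> {0..<2*m+1}" using ij by auto
  ultimately have "i = j" using ij(3) inj_onD by metis
  then show False using ij(1) by simp
qed

lemma pow2: "x \<in> carrier G \<Longrightarrow> x [^] (2::nat) = x \<otimes> x"
  by (simp add: numeral_2_eq_2)

lemma odd_inv_one:
  fixes m :: nat
  assumes "odd m" "x \<in> carrier G" "x [^] (2::nat) = \<one>" "x [^] m = \<one>"
  shows "x = \<one>"
proof -
  obtain k where k: "m = Suc (2 * k)" using assms(1) oddE by (metis Suc_eq_plus1)
  have "x [^] m = (x [^] (2::nat)) [^] k \<otimes> x" unfolding k using assms(2) by (simp add: nat_pow_pow)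
  then show ?thesis using assms by simp
qed

lemma classify:
  assumes sat: "satisfies_all m G" and odd: "odd m" and m0: "m > 0"
  shows "is_section_of G (dihedral m)"
proof -
  have d1: "did1 m G" and d2: "did2 G" and d3: "did3 m G"
    and d4: "\<And>p. Factorial_Ring.prime p \<Longrightarrow> p dvd m \<Longrightarrow> did4 m p G" and d5: "did5 m G"
    using sat unfolding satisfies_all_def by auto
  have fin: "finite (carrier G)" by (rule finite_from_did1[OF d1])
  define N where "N = {x \<in> carrier G. x [^] m = \<one>}"
  have Ncar: "x \<in> carrier G" if "x \<in> N" for x using that N_def by blast
  have Npow: "x [^] m = \<one>" if "x \<in> N" for x using that N_def by blast
  have N1: "\<one> \<in> N" unfolding N_def by simp
  have notN: "x [^] (2::nat) = \<one>" if "x \<in> carrier G" "x \<notin> N" for x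
    using d3 that unfolding did3_def N_def by blast
  have Nsq: "x [^] (2::nat) \<noteq> \<one>" if "x \<in> N" "x \<noteq> \<one>" for x
    using odd_inv_one[OF odd] that Ncar Npow by blast
  have Ncomm: "\<forall>x\<in>N. \<forall>y\<in>N. x \<otimes> y = y \<otimes> x"
  proof (intro ballI)
    fix x y assume x: "x \<in> N" and y: "y \<in> N"
    show "x \<otimes> y = y \<otimes> x"
    proof (cases "x = \<one> \<or> y = \<one>")
      case True then show ?thesis using x y Ncar by auto
    next
      case False
      have "x [^] (2::nat) = \<one> \<or> y [^] (2::nat) = \<one> \<or> x \<otimes> y = y \<otimes> x"
        using d2 Ncar[OF x] Ncar[OF y] unfolding did2_def by blast
      then show ?thesis using Nsq[OF x] Nsq[OF y] False by blast
    qed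
  qed
  have Nmult: "\<forall>x\<in>N. \<forall>y\<in>N. x \<otimes> y \<in> N"
  proof (intro ballI)
    fix x y assume x: "x \<in> N" and y: "y \<in> N"
    have "(x \<otimes> y) [^] m = x [^] m \<otimes> y [^] m"
    proof -
      have "x \<otimes> y = y \<otimes> x" using Ncomm x y by blast
      then show ?thesis using pow_mult_distrib Ncar[OF x] Ncar[OF y] by blast
    qed
    then show "x \<otimes> y \<in> N" using Npow[OF x] Npow[OF y] Ncar[OF x] Ncar[OF y] unfolding N_def by simp
  qed
  have Ninv: "inv x \<in> N" if "x \<in> N" for x
  proof -
    have "x [^] (m - 1) \<otimes> x = x [^] m" using m0 Ncar[OF that]
      by (metis Suc_diff_1 nat_pow_Suc)
    then have "inv x = x [^] (m - 1)" using Ncar[OF that] Npow[OF that] by (simp add: inv_equality)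
    then show ?thesis using pow_closed_set[OF N1 Nmult that] by simp
  qed
  have Ncmp: "\<forall>p. Factorial_Ring.prime p \<and> p dvd m \<longrightarrow> (\<forall>x\<in>N. \<forall>y\<in>N.
           x [^] (m div p ^ multiplicity p m) \<in> cyc G (y [^] (m div p ^ multiplicity p m))
         \<or> y [^] (m div p ^ multiplicity p m) \<in> cyc G (x [^] (m div p ^ multiplicity p m)))"
  proof (intro allI impI ballI)
    fix p x y assume p: "Factorial_Ring.prime p \<and> p dvd m" and x: "x \<in> N" and y: "y \<in> N"
    define e where "e = m div p ^ multiplicity p m"
    show "x [^] e \<in> cyc G (y [^] e) \<or> y [^] e \<in> cyc G (x [^] e)"
    proof (cases "x = \<one> \<or> y = \<one>")
      case True
      then show ?thesis by (metis cyc_powI nat_pow_0 nat_pow_one)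
    next
      case False
      then have "in_p m p G (x [^] e) (y [^] e) \<or> in_p m p G (y [^] e) (x [^] e)"
        using d4[of p] p x y Nsq Ncar unfolding did4_def Let_def e_def by blast
      then show ?thesis unfolding in_p_def by (metis cyc_powI)
    qed
  qed
  obtain g where gN: "g \<in> N" and Ncyc: "N \<subseteq> cyc G g"
    using cyc_gen[OF fin m0 _ N1 Nmult Ncomm _ Ncmp] Ncar Npow by blast
  have gcar: "g \<in> carrier G" using gN Ncar by blast
  define n where "n = ord g"
  have n0: "n > 0" unfolding n_def using ord_ge_1[OF fin gcar] by simp
  have gn: "g [^] n = \<one>" unfolding n_def using gcar by simp
  have ndvd: "n dvd m" unfolding n_def using gcar Npow[OF gN] pow_eq_id by blast
  have gmod: "g [^] k = g [^] (k mod n)" for k :: nat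
  proof -
    have "(g [^] n) [^] (k div n) \<otimes> g [^] (k mod n) = g [^] k"
      using gcar by (simp add: nat_pow_mult nat_pow_pow)
    then show ?thesis using gn gcar by simp
  qed
  have ginj: "i = j" if "i < n" "j < n" "g [^] i = g [^] j" for i j :: nat
  proof -
    have "inj_on (\<lambda>x. g [^] x) {0..ord g - 1}" by (rule ord_inj[OF gcar])
    then show ?thesis using that n0 unfolding n_def inj_on_def by fastforce
  qed
  have Nrep: "\<exists>i<n. x = g [^] i" if xN: "x \<in> N" for x
  proof -
    obtain k :: nat where "x = g [^] k" using xN Ncyc unfolding cyc_def by blast
    then show ?thesis using gmod n0 by (intro exI[of _ "k mod n"]) auto
  qed
  have gpN: "g [^] (i::nat) \<in> N" for i using pow_closed_set[OF N1 Nmult gN] by blast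
  have gcomp: "g [^] (n - i) \<otimes> g [^] i = \<one>" if "i \<le> n" for i
    using that gcar gn by (simp add: nat_pow_mult)
  define d where "d = m div n"
  have mdn: "m = d * n" unfolding d_def using ndvd by simp
  have d0: "d > 0" using mdn m0 by (simp add: nat_0_less_mult_iff)
  define T where "T = (\<exists>t\<in>carrier G. t \<notin> N)"
  define t where "t = (SOME t. t \<in> carrier G \<and> t \<notin> N)"
  have tprop: "t \<in> carrier G \<and> t \<notin> N" if T using that unfolding T_def t_def
    by (metis (mono_tags, lifting) someI_ex)
  have tt: "t \<otimes> t = \<one>" if T using tprop[OF that] notN pow2 by metis
  have tcomm: "t \<otimes> g [^] i = g [^] (n - i) \<otimes> t" if T "i \<le> n" for i
  proof -
    note tc = tprop[OF that(1)]
    let ?a = "g [^] i" and ?b = "g [^] (n - i)"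
    have ac: "?a \<in> carrier G" and bc: "?b \<in> carrier G" using gcar by auto
    have "?a \<otimes> t \<notin> N"
    proof
      assume "?a \<otimes> t \<in> N"
      then have "inv ?a \<otimes> (?a \<otimes> t) \<in> N" using Ninv gpN Nmult by blast
      then show False using tc ac by (simp add: m_assoc[symmetric])
    qed
    then have h1: "?a \<otimes> t \<otimes> (?a \<otimes> t) = \<one>" using notN pow2 tc ac by (metis m_closed)
    have h2: "?a \<otimes> t \<otimes> ?a = t"
    proof -
      have "?a \<otimes> t \<otimes> ?a = ?a \<otimes> t \<otimes> ?a \<otimes> (t \<otimes> t)" using tt[OF that(1)] tc ac by simp
      also have "\<dots> = (?a \<otimes> t \<otimes> (?a \<otimes> t)) \<otimes> t" using tc ac by (simp add: m_assoc)
      finally show ?thesis using h1 tc by simp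
    qed
    have "t \<otimes> ?a = ?b \<otimes> ?a \<otimes> (t \<otimes> ?a)" using gcomp[OF that(2)] tc ac by simp
    also have "\<dots> = ?b \<otimes> (?a \<otimes> t \<otimes> ?a)" using tc ac bc by (simp add: m_assoc)
    finally show ?thesis using h2 by simp
  qed
  define D where "D = dihedral m"
  have Dgrp: "group D" unfolding D_def using dihedral_group[OF m0] .
  define K where "K = {(d * i, s) | i s. i < n \<and> (s \<longrightarrow> T)}"
  have Kmul: "a \<otimes>\<^bsub>D\<^esub> b \<in> K" if ab: "a \<in> K" "b \<in> K" for a b
  proof -
    obtain i1 s1 where a: "a = (d * i1, s1)" "i1 < n" "s1 \<longrightarrow> T" using ab K_def by blast
    obtain i2 s2 where b: "b = (d * i2, s2)" "i2 < n" "s2 \<longrightarrow> T" using ab K_def by blast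
    show ?thesis unfolding a b D_def Kmult[OF mdn n0 a(2) b(2)] K_def using n0 a b by auto
  qed
  have Kcar: "K \<subseteq> carrier D"
  proof
    fix a assume "a \<in> K"
    then obtain i s where a: "a = (d * i, s)" "i < n" using K_def by blast
    have "d * i < d * n" using a d0 by simp
    then show "a \<in> carrier D" using a mdn unfolding D_def by (simp add: dcarrier)
  qed
  have subK: "subgroup K D"
  proof (rule group.subgroupI[OF Dgrp Kcar])
    show "K \<noteq> {}" unfolding K_def using n0 by auto
  next
    fix a b assume "a \<in> K" "b \<in> K" then show "a \<otimes>\<^bsub>D\<^esub> b \<in> K" by (rule Kmul)
  next
    fix a assume aK: "a \<in> K"
    then obtain i s where a: "a = (d * i, s)" "i < n" "s \<longrightarrow> T" using K_def by blast
    have acar: "a \<in> carrier D" using aK Kcar by blast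
    show "inv\<^bsub>D\<^esub> a \<in> K"
    proof (cases s)
      case True
      have "a \<otimes>\<^bsub>D\<^esub> a = \<one>\<^bsub>D\<^esub>"
        unfolding a D_def Kmult[OF mdn n0 a(2) a(2)] using True a(2) by (simp add: dunit)
      then have "inv\<^bsub>D\<^esub> a = a" using group.inv_equality[OF Dgrp] acar by blast
      then show ?thesis using aK by simp
    next
      case False
      define b where "b = (d * ((n - i) mod n), False)"
      have bK: "b \<in> K" unfolding b_def K_def using n0 mod_less_divisor by blast
      have z0: "((n - i) mod n + i) mod n = 0" using a(2) by (simp add: mod_add_left_eq)
      have lt: "(n - i) mod n < n" using n0 by simp
      have "b \<otimes>\<^bsub>D\<^esub> a = \<one>\<^bsub>D\<^esub>"
        unfolding a b_def D_def Kmult[OF mdn n0 lt a(2)] using False a(2) n0 z0 by (simp add: dunit)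
      then have "inv\<^bsub>D\<^esub> a = b" using group.inv_equality[OF Dgrp] acar bK Kcar by blast
      then show ?thesis using bK by simp
    qed
  qed
  define DK where "DK = D\<lparr>carrier := K\<rparr>"
  have DKgrp: "group DK" unfolding DK_def using subgroup.subgroup_is_group[OF subK Dgrp] .
  define \<phi> where "\<phi> = (\<lambda>(j, s). g [^] (j div d) \<otimes> (if s then t else \<one>))"
  have \<phi>K: "\<phi> (d * i, s) = g [^] i \<otimes> (if s then t else \<one>)" for i s
    unfolding \<phi>_def using d0 by simp
  have \<phi>car: "\<phi> a \<in> carrier G" if "a \<in> K" for a
    using that tprop gcar unfolding K_def by (auto simp: \<phi>K)
  have \<phi>hom: "\<phi> (a \<otimes>\<^bsub>D\<^esub> b) = \<phi> a \<otimes> \<phi> b" if ab: "a \<in> K" "b \<in> K" for a b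
  proof -
    obtain i1 s1 where a: "a = (d * i1, s1)" "i1 < n" "s1 \<longrightarrow> T" using ab K_def by blast
    obtain i2 s2 where b: "b = (d * i2, s2)" "i2 < n" "s2 \<longrightarrow> T" using ab K_def by blast
    have ab: "a \<otimes>\<^bsub>D\<^esub> b = (d * (if s1 then (i1 + (n - i2)) mod n else (i1 + i2) mod n), s1 \<noteq> s2)"
      unfolding a b D_def by (rule Kmult[OF mdn n0 a(2) b(2)])
    have g1: "g [^] i1 \<in> carrier G" "g [^] i2 \<in> carrier G" "g [^] (n - i2) \<in> carrier G"
      using gcar by auto
    have lhs: "\<phi> (a \<otimes>\<^bsub>D\<^esub> b) = g [^] (if s1 then (i1 + (n - i2)) mod n else (i1 + i2) mod n)
       \<otimes> (if s1 \<noteq> s2 then t else \<one>)" by (simp only: ab \<phi>K)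
    have rhs: "\<phi> a \<otimes> \<phi> b = g [^] i1 \<otimes> (if s1 then t else \<one>) \<otimes> (g [^] i2 \<otimes> (if s2 then t else \<one>))"
      by (simp only: a b \<phi>K)
    show ?thesis
    proof (cases s1)
      case False
      have "g [^] ((i1 + i2) mod n) = g [^] i1 \<otimes> g [^] i2"
        using gmod gcar by (metis nat_pow_mult)
      then show ?thesis unfolding lhs rhs using False g1 tprop b(3)
        by (cases s2) (auto simp: m_assoc)
    next
      case True
      note tc = tprop[OF a(3)[rule_format, OF True]]
      have TT: T using a(3) True by blast
      have e1: "g [^] ((i1 + (n - i2)) mod n) = g [^] i1 \<otimes> g [^] (n - i2)"
        using gmod gcar by (metis nat_pow_mult)
      have e2: "t \<otimes> g [^] i2 = g [^] (n - i2) \<otimes> t" using tcomm[OF TT] b(2) by simp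
      have "g [^] i1 \<otimes> t \<otimes> (g [^] i2 \<otimes> (if s2 then t else \<one>))
          = g [^] i1 \<otimes> (t \<otimes> g [^] i2) \<otimes> (if s2 then t else \<one>)"
        using g1 tc by (auto simp: m_assoc)
      also have "\<dots> = g [^] i1 \<otimes> g [^] (n - i2) \<otimes> (t \<otimes> (if s2 then t else \<one>))"
        unfolding e2 using g1 tc by (auto simp: m_assoc)
      finally have "\<phi> a \<otimes> \<phi> b = g [^] ((i1 + (n - i2)) mod n) \<otimes> (t \<otimes> (if s2 then t else \<one>))"
        unfolding rhs e1 using True by simp
      then show ?thesis unfolding lhs using True tt[OF TT] tc g1
        by (cases s2) auto
    qed
  qed
  have \<phi>inj: "inj_on \<phi> K"
  proof (rule inj_onI)
    fix a b assume aK: "a \<in> K" and bK: "b \<in> K" and eq: "\<phi> a = \<phi> b"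
    obtain i1 s1 where a: "a = (d * i1, s1)" "i1 < n" "s1 \<longrightarrow> T" using aK K_def by blast
    obtain i2 s2 where b: "b = (d * i2, s2)" "i2 < n" "s2 \<longrightarrow> T" using bK K_def by blast
    have g1: "g [^] i1 \<in> carrier G" "g [^] i2 \<in> carrier G" using gcar by auto
    have eq': "g [^] i1 \<otimes> (if s1 then t else \<one>) = g [^] i2 \<otimes> (if s2 then t else \<one>)"
      using eq unfolding a b \<phi>K .
    have tN: "t \<in> N" if TT: T and h: "g [^] i1 \<otimes> t = g [^] i2" for i1 i2 :: nat
    proof -
      note tc = tprop[OF TT]
      have ga: "g [^] i1 \<in> carrier G" "g [^] i2 \<in> carrier G" using gcar by auto
      have "inv (g [^] i1) \<otimes> (g [^] i1 \<otimes> t) = t"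
        using ga tc by (simp add: m_assoc[symmetric])
      then have "t = inv (g [^] i1) \<otimes> g [^] i2" using h by simp
      moreover have "inv (g [^] i1) \<in> N" using Ninv gpN by blast
      ultimately show ?thesis using Nmult gpN by metis
    qed
    show "a = b"
    proof (cases "s1 = s2")
      case True
      have "g [^] i1 = g [^] i2"
      proof (cases s1)
        case s: True
        then have TT: T using a(3) by blast
        have "g [^] i1 \<otimes> t = g [^] i2 \<otimes> t" using eq' s True by simp
        then show ?thesis using right_cancel g1 tprop[OF TT] by blast
      next
        case False
        then show ?thesis using eq' True g1 by simp
      qed
      then show ?thesis using ginj a b True by blast
    next
      case False
      show ?thesis
      proof (cases s1)
        case True
        then have "g [^] i1 \<otimes> t = g [^] i2" using eq' False g1 by simp
        moreover have T using a(3) True by blast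
        ultimately have "t \<in> N" using tN by blast
        then show ?thesis using tprop \<open>T\<close> by blast
      next
        case F: False
        then have "g [^] i2 \<otimes> t = g [^] i1" using eq' False g1 by simp
        moreover have T using b(3) False F by blast
        ultimately have "t \<in> N" using tN by blast
        then show ?thesis using tprop \<open>T\<close> by blast
      qed
    qed
  qed
  have \<phi>surj: "\<phi> ` K = carrier G"
  proof
    show "\<phi> ` K \<subseteq> carrier G" using \<phi>car by blast
  next
    show "carrier G \<subseteq> \<phi> ` K"
    proof
      fix x assume x: "x \<in> carrier G"
      show "x \<in> \<phi> ` K"
      proof (cases "x \<in> N")
        case True
        then obtain i where i: "i < n" "x = g [^] i" using Nrep by blast
        have "(d * i, False) \<in> K" unfolding K_def using i by auto
        moreover have "\<phi> (d * i, False) = x" using i gcar by (simp add: \<phi>K)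
        ultimately show ?thesis by (metis image_eqI)
      next
        case False
        then have TT: T unfolding T_def using x by blast
        note tc = tprop[OF TT]
        have "x [^] m \<noteq> \<one>" "t [^] m \<noteq> \<one>" using False x tc unfolding N_def by auto
        then have "(x \<otimes> t) [^] m = \<one>" using d5 x tc unfolding did5_def by blast
        then have "x \<otimes> t \<in> N" using x tc unfolding N_def by auto
        then obtain i where i: "i < n" "x \<otimes> t = g [^] i" using Nrep by blast
        have tcar: "t \<in> carrier G" using tc by blast
        have "g [^] i \<otimes> t = x \<otimes> (t \<otimes> t)" using i(2)[symmetric] x tcar by (simp add: m_assoc)
        then have "g [^] i \<otimes> t = x" using tt[OF TT] x by simp
        moreover have "(d * i, True) \<in> K" unfolding K_def using i TT by auto
        ultimately show ?thesis using \<phi>K by (metis image_eqI)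
      qed
    qed
  qed
  have iso1: "\<phi> \<in> iso DK G"
    unfolding iso_def hom_def DK_def bij_betw_def
    using \<phi>car \<phi>hom \<phi>inj \<phi>surj by auto
  have GDK: "G \<cong> DK" using group.iso_sym[OF DKgrp is_isoI[OF iso1]] .
  have one: "\<one>\<^bsub>DK\<^esub> = \<one>\<^bsub>D\<^esub>" unfolding DK_def by simp
  have nrm: "{\<one>\<^bsub>D\<^esub>} \<lhd> DK" using group.one_is_normal[OF DKgrp] one by simp
  have "DK Mod {\<one>\<^bsub>D\<^esub>} \<cong> DK" using is_isoI[OF group.trivial_factor_iso[OF DKgrp]] one by simp
  then have "DK \<cong> DK Mod {\<one>\<^bsub>D\<^esub>}" using group.iso_sym normal.factorgroup_is_group[OF nrm] by blast
  then have "G \<cong> DK Mod {\<one>\<^bsub>D\<^esub>}" using iso_trans GDK by blast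
  then show ?thesis unfolding is_section_of_def using subK nrm unfolding DK_def D_def by blast
qed

end

theorem mainTheorem5:
  fixes m :: nat
  assumes "odd m" and "m > 0"
  shows "group (dihedral m) \<and> satisfies_all m (dihedral m)
    \<and> (\<forall>H :: 'b monoid. group H \<and> satisfies_all m H \<longrightarrow> is_section_of H (dihedral m))"
proof -
  have 1: "group (dihedral m)" by (rule dihedral_group[OF assms(2)])
  have 2: "satisfies_all m (dihedral m)" by (rule D_sat[OF assms(2)])
  have 3: "\<forall>H :: 'b monoid. group H \<and> satisfies_all m H \<longrightarrow> is_section_of H (dihedral m)"
    using group.classify assms by blast
  show ?thesis using 1 2 3 by blast
qed

end
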